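(* Let $\mathcal{A}$ be a complex Banach algebra with identity, let $\lambda$ be a nonzero complex number, and let $a, b \in \mathcal{A}^d$. If $$ab = \lambda\, a^\pi b a b^\pi,$$ then $a + b \in \mathcal{A}^d$ and $$\begin{aligned}(a + b)^d ={}& b^\pi a^d + b^d a^\pi + \sum_{n=0}^{\infty} (b^d)^{n+2} a (a + b)^n a^\pi + b^\pi \sum_{n=0}^{\infty} (a + b)^n b (a^d)^{n+2} \\ &- \sum_{n=0}^{\infty} \sum_{k=0}^{\infty} (b^d)^{k+1} a (a + b)^{n+k} b (a^d)^{n+2} - \sum_{n=0}^{\infty} (b^d)^{n+2} a (a + b)^n b a^d ,\end{aligned}$$ where all series converge.
   Context: For $x\in\mathcal{A}$, $\mathrm{comm}(x)=\{y\in\mathcal{A}: xy=yx\}$. $\mathcal{A}^{qnil}$ is the set of quasinilpotent elements of $\mathcal{A}$, i.e. those $x$ with $\lim_{n\to\infty}\|x^n\|^{1/n}=0$. An element $x\in\mathcal{A}$ has a generalized Drazin (g-Drazin) inverse if there is $y \in \mathrm{comm}(x)$ with $y = yxy$ and $x - x^2y \in \mathcal{A}^{qnil}$; such $y$ is unique and denoted $x^d$. $\mathcal{A}^d$ denotes the set of g-Drazin invertible elements. The spectral idempotent of $x\in\mathcal{A}^d$ is $x^\pi = 1 - xx^d$. *)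

theory Defs
  imports "HOL-Analysis.Analysis"
begin

class scaleC =
  fixes scaleC :: "complex \<Rightarrow> 'a \<Rightarrow> 'a" (infixr \<open>*\<^sub>C\<close> 75)

class complex_banach_algebra_1 = real_normed_algebra_1 + banach + scaleC +
  assumes scaleC_add_right: "c *\<^sub>C (x + y) = c *\<^sub>C x + c *\<^sub>C y"
    and scaleC_add_left: "(c + d) *\<^sub>C x = c *\<^sub>C x + d *\<^sub>C x"
    and scaleC_scaleC: "c *\<^sub>C (d *\<^sub>C x) = (c * d) *\<^sub>C x"
    and scaleC_one: "1 *\<^sub>C x = x"
    and scaleR_scaleC: "r *\<^sub>R x = complex_of_real r *\<^sub>C x"
    and norm_scaleC: "norm (c *\<^sub>C x) = cmod c * norm x"
    and mult_scaleC_left: "(c *\<^sub>C x) * y = c *\<^sub>C (x * y)"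
    and mult_scaleC_right: "x * (c *\<^sub>C y) = c *\<^sub>C (x * y)"

definition quasinilpotent :: "'a::real_normed_algebra_1 \<Rightarrow> bool" where
  "quasinilpotent x \<longleftrightarrow> (\<lambda>n. root n (norm (x ^ n))) \<longlonglongrightarrow> 0"

definition is_gdrazin_inverse :: "'a::real_normed_algebra_1 \<Rightarrow> 'a \<Rightarrow> bool" where
  "is_gdrazin_inverse x y \<longleftrightarrow> x * y = y * x \<and> y = y * x * y \<and> quasinilpotent (x - x * x * y)"

definition gdrazin_invertible :: "'a::real_normed_algebra_1 \<Rightarrow> bool" where
  "gdrazin_invertible x \<longleftrightarrow> (\<exists>y. is_gdrazin_inverse x y)"

definition gdrazin :: "'a::real_normed_algebra_1 \<Rightarrow> 'a" where
  "gdrazin x = (THE y. is_gdrazin_inverse x y)"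

definition spectral_idem :: "'a::real_normed_algebra_1 \<Rightarrow> 'a" where
  "spectral_idem x = 1 - x * gdrazin x"

end

theory Submission
  imports Defs
begin


lemma scaleC_zero_right [simp]: "(c::complex) *\<^sub>C (0::'a::complex_banach_algebra_1) = 0"
proof -
  have "c *\<^sub>C (0::'a) = c *\<^sub>C 0 + c *\<^sub>C 0" using scaleC_add_right[of c "0::'a" 0] by simp
  thus ?thesis by simp
qed

lemma scaleC_zero_left [simp]: "(0::complex) *\<^sub>C (x::'a::complex_banach_algebra_1) = 0"
proof -
  have "(0::complex) *\<^sub>C x = 0 *\<^sub>C x + 0 *\<^sub>C x" using scaleC_add_left[of 0 0 x] by simp
  thus ?thesis by simp
qed

lemma qn_bound:
  fixes x :: "'a::real_normed_algebra_1"
  assumes "quasinilpotent x" "e > 0"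
  shows "\<exists>C. \<forall>n. norm (x^n) \<le> C * e^n"
proof -
  have "eventually (\<lambda>n. root n (norm (x^n)) < e) sequentially"
    using assms unfolding quasinilpotent_def by (intro order_tendstoD(2)) auto
  then obtain N where N: "\<And>n. n \<ge> N \<Longrightarrow> root n (norm (x^n)) < e"
    unfolding eventually_sequentially by blast
  define C where "C = 1 + (\<Sum>i<N+1. norm (x^i) / e^i)"
  have C1: "C \<ge> 1" unfolding C_def by (intro add_increasing2 sum_nonneg) (auto intro: divide_nonneg_pos simp: assms)
  have "norm (x^n) \<le> C * e^n" for n
  proof (cases "n \<le> N")
    case True
    have "norm (x^n) / e^n \<le> (\<Sum>i<N+1. norm (x^i) / e^i)"
      by (rule member_le_sum[where f = "\<lambda>i. norm (x^i) / e^i"]) (use True assms in auto)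
    also have "\<dots> \<le> C" unfolding C_def by simp
    finally show ?thesis using assms by (simp add: divide_le_eq)
  next
    case False
    hence n: "n > 0" "n \<ge> N" by auto
    have "norm (x^n) = root n (norm (x^n)) ^ n" using n by simp
    also have "\<dots> \<le> e ^ n" using N[OF n(2)] by (intro power_mono) (auto simp: real_root_ge_zero)
    also have "\<dots> \<le> C * e^n" using C1 assms by simp
    finally show ?thesis .
  qed
  thus ?thesis by blast
qed

lemma bound_qn:
  fixes x :: "'a::real_normed_algebra_1"
  assumes "\<And>e. e > 0 \<Longrightarrow> \<exists>C. \<forall>n. norm (x^n) \<le> C * e^n"
  shows "quasinilpotent x"
  unfolding quasinilpotent_def LIMSEQ_iff
proof (intro allI impI)
  fix r :: real assume r: "r > 0"
  obtain C where C: "\<And>n. norm (x^n) \<le> C * (r/4)^n" using assms[of "r/4"] r by auto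
  define C' where "C' = max C 0 + 1"
  have C'pos: "C' > 0" unfolding C'_def by simp
  have C': "norm (x^n) \<le> C' * (r/4)^n" for n
    using C[of n] r unfolding C'_def by (smt (verit) mult_right_mono zero_le_power zero_le_divide_iff)
  have "eventually (\<lambda>n. root n C' < 2) sequentially"
    using LIMSEQ_root_const[OF C'pos] by (intro order_tendstoD(2)) auto
  then obtain N where N: "\<And>n. n \<ge> N \<Longrightarrow> root n C' < 2" unfolding eventually_sequentially by blast
  show "\<exists>no. \<forall>n\<ge>no. norm (root n (norm (x ^ n)) - 0) < r"
  proof (intro exI allI impI)
    fix n assume n: "n \<ge> max N 1"
    hence n0: "n > 0" by auto
    have "root n (norm (x^n)) \<le> root n (C' * (r/4)^n)"
      using C' n0 by (simp add: real_root_le_iff)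
    also have "\<dots> = root n C' * (r/4)" using n0 r by (simp add: real_root_mult real_root_power_cancel)
    also have "\<dots> < 2 * (r/4)" using N[of n] n r by (intro mult_strict_right_mono) auto
    finally show "norm (root n (norm (x ^ n)) - 0) < r" using r n0 by (simp add: real_root_ge_zero)
  qed
qed

lemma qn_decay:
  fixes x :: "'a::real_normed_algebra_1"
  assumes "quasinilpotent x" "K \<ge> 0"
  shows "(\<lambda>n. K^n * norm (x^n)) \<longlonglongrightarrow> 0"
proof -
  define e where "e = 1 / (2 * (K + 1))"
  have e: "e > 0" unfolding e_def using assms by simp
  obtain C where C: "\<And>n. norm (x^n) \<le> C * e^n" using qn_bound[OF assms(1) e] by auto
  have Ke: "K * e \<le> 1/2" "K * e \<ge> 0" unfolding e_def using assms by (auto simp: field_simps)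
  show ?thesis
  proof (rule Lim_null_comparison)
    show "eventually (\<lambda>n. norm (K^n * norm (x^n)) \<le> \<bar>C\<bar> * (1/2)^n) sequentially"
    proof (intro always_eventually allI)
      fix n
      have "norm (K^n * norm (x^n)) = K^n * norm (x^n)" using assms by simp
      also have "\<dots> \<le> K^n * (C * e^n)" using C[of n] assms by (intro mult_left_mono) auto
      also have "\<dots> = C * (K*e)^n" by (simp add: power_mult_distrib)
      also have "\<dots> \<le> \<bar>C\<bar> * (K*e)^n" using Ke by (intro mult_right_mono) auto
      also have "\<dots> \<le> \<bar>C\<bar> * (1/2)^n" using Ke by (intro mult_left_mono power_mono) auto
      finally show "norm (K^n * norm (x^n)) \<le> \<bar>C\<bar> * (1/2)^n" .
    qed
    show "(\<lambda>n. \<bar>C\<bar> * (1/2::real)^n) \<longlonglongrightarrow> 0"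
      by (intro tendsto_mult_right_zero LIMSEQ_power_zero) auto
  qed
qed

lemma zero_from_decay:
  fixes x z :: "'a::real_normed_algebra_1"
  assumes "quasinilpotent x" "K \<ge> 0" "\<And>n. n \<ge> 1 \<Longrightarrow> norm z \<le> M * (K^n * norm (x^n))"
  shows "z = 0"
proof -
  have "(\<lambda>n. M * (K^n * norm (x^n))) \<longlonglongrightarrow> M * 0"
    by (intro tendsto_mult tendsto_const qn_decay assms)
  hence "norm z \<le> M * 0" by (rule LIMSEQ_le_const) (use assms(3) in blast)
  thus ?thesis by simp
qed



lemma comm_power_mult:
  fixes x y :: "'a::monoid_mult"
  assumes "x * y = y * x"
  shows "(x * y)^n = x^n * y^n"
proof (induction n)
  case (Suc n)
  have c: "x^n * y = y * x^n" using assms by (rule power_commuting_commutes)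
  have "(x*y)^Suc n = x * y * (x^n * y^n)" using Suc by (simp add: power_Suc mult.assoc)
  also have "\<dots> = x * (y * x^n) * y^n" by (simp add: mult.assoc)
  also have "\<dots> = x * (x^n * y) * y^n" using c by simp
  also have "\<dots> = x^Suc n * y^Suc n" by (simp add: mult.assoc power_Suc power_Suc2)
  finally show ?case .
qed simp

lemma idem_power:
  fixes e :: "'a::monoid_mult"
  assumes "e * e = e"
  shows "e ^ Suc n = e"
  by (induction n) (simp_all add: power_Suc2 mult.assoc assms del: power_Suc)

lemma norm_pow_le:
  fixes y :: "'a::real_normed_algebra_1"
  shows "norm (y^n) \<le> norm y ^ n"
  by (rule norm_power_ineq)

lemma gd_basic:
  fixes x y :: "'a::real_normed_algebra_1"
  assumes "is_gdrazin_inverse x y"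
  shows "x * y = y * x" "y * x * y = y" "quasinilpotent (x - x * x * y)"
    "(x*y) * (x*y) = x*y"
    "(1 - x*y) * x = x * (1 - x*y)"
    "(1 - x*y) * (1 - x*y) = 1 - x*y"
    "x * (1 - x*y) = x - x*x*y"
proof -
  show c: "x * y = y * x" and i: "y * x * y = y" and "quasinilpotent (x - x * x * y)"
    using assms unfolding is_gdrazin_inverse_def by auto
  show e: "(x*y) * (x*y) = x*y"
  proof -
    have "(x*y)*(x*y) = x * (y*x*y)" by (simp add: mult.assoc)
    thus ?thesis using i by simp
  qed
  show "(1 - x*y) * x = x * (1 - x*y)"
  proof -
    have "x*y*x = x*(y*x)" by (simp add: mult.assoc)
    also have "\<dots> = x*(x*y)" using c by simp
    finally show ?thesis by (simp add: algebra_simps)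
  qed
  show "(1 - x*y) * (1 - x*y) = 1 - x*y" using e by (simp add: algebra_simps)
  show "x * (1 - x*y) = x - x*x*y" by (simp add: algebra_simps)
qed

lemma gd_half:
  fixes x y z :: "'a::real_normed_algebra_1"
  assumes y: "is_gdrazin_inverse x y" and z: "is_gdrazin_inverse x z"
  shows "x*y*(1 - x*z) = 0 \<and> (1 - x*z)*(x*y) = 0"
proof -
  define q where "q = 1 - x*z"
  define N where "N = x - x*x*z"
  note Y = gd_basic[OF y] and Z = gd_basic[OF z]
  have qx: "q * x = x * q" unfolding q_def by (rule Z(5))
  have qq: "q * q = q" unfolding q_def by (rule Z(6))
  have Nq: "N = x * q" unfolding N_def q_def by (simp add: Z(7))
  have qnN: "quasinilpotent N" unfolding N_def by (rule Z(3))
  have Npow: "N^Suc n = x^Suc n * q" for n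
    unfolding Nq comm_power_mult[OF qx[symmetric]] idem_power[OF qq] ..
  have qxpow: "q * x^n = x^n * q" for n by (rule power_commuting_commutes[OF qx[symmetric], symmetric])
  have epow: "x*y = y^Suc n * x^Suc n" for n
  proof -
    have "x*y = (x*y)^Suc n" using idem_power[OF Y(4)] by simp
    also have "\<dots> = (y*x)^Suc n" using Y(1) by simp
    also have "\<dots> = y^Suc n * x^Suc n" by (rule comm_power_mult) (simp add: Y(1))
    finally show ?thesis .
  qed
  have epow': "x*y = x^Suc n * y^Suc n" for n
  proof -
    have "x*y = (x*y)^Suc n" using idem_power[OF Y(4)] by simp
    also have "\<dots> = x^Suc n * y^Suc n" by (rule comm_power_mult) (simp add: Y(1))
    finally show ?thesis .
  qed
  have "x*y*q = 0"
  proof (rule zero_from_decay[OF qnN norm_ge_zero, where M = 1])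
    fix n :: nat assume "n \<ge> 1"
    then obtain m where m: "n = Suc m" by (cases n) auto
    have "x*y*q = y^n * N^n" unfolding m epow[of m] Npow by (simp add: mult.assoc)
    hence "norm (x*y*q) \<le> norm (y^n) * norm (N^n)" by (simp add: norm_mult_ineq)
    also have "\<dots> \<le> norm y ^ n * norm (N^n)" by (intro mult_right_mono norm_pow_le) auto
    finally show "norm (x*y*q) \<le> 1 * (norm y ^ n * norm (N^n))" by simp
  qed
  moreover have "q*(x*y) = 0"
  proof (rule zero_from_decay[OF qnN norm_ge_zero, where M = 1])
    fix n :: nat assume "n \<ge> 1"
    then obtain m where m: "n = Suc m" by (cases n) auto
    have "q*(x*y) = q * x^n * y^n" unfolding m epow'[of m] by (simp add: mult.assoc)
    also have "\<dots> = N^n * y^n" unfolding m Npow qxpow ..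
    finally have "norm (q*(x*y)) \<le> norm (N^n) * norm (y^n)" by (simp add: norm_mult_ineq)
    also have "\<dots> \<le> norm (N^n) * norm y ^ n" by (intro mult_left_mono norm_pow_le) auto
    finally show "norm (q*(x*y)) \<le> 1 * (norm y ^ n * norm (N^n))" by (simp add: mult.commute)
  qed
  ultimately show ?thesis unfolding q_def by simp
qed

lemma gd_unique:
  fixes x y z :: "'a::real_normed_algebra_1"
  assumes y: "is_gdrazin_inverse x y" and z: "is_gdrazin_inverse x z"
  shows "y = z"
proof -
  note Y = gd_basic[OF y] and Z = gd_basic[OF z]
  have h1: "(1 - x*z)*(x*y) = 0" using gd_half[OF y z] by simp
  have h2: "x*z*(1 - x*y) = 0" using gd_half[OF z y] by simp
  have e1: "x*y = x*z*(x*y)" using h1 by (metis left_diff_distrib mult_1_left eq_iff_diff_eq_0 mult.assoc)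
  have e2: "x*z = x*z*(x*y)" using h2 by (metis right_diff_distrib mult_1_right eq_iff_diff_eq_0)
  have ef: "x*y = x*z" using e1 e2 by metis
  have "y = y*(x*y)" using Y(2) by (simp add: mult.assoc)
  also have "\<dots> = y*(x*z)" using ef by simp
  also have "\<dots> = (y*x)*z" by (simp add: mult.assoc)
  also have "\<dots> = (x*z)*z" using Y(1) ef by simp
  also have "\<dots> = (z*x)*z" using Z(1) by simp
  also have "\<dots> = z" using Z(2) .
  finally show ?thesis .
qed

lemma gd_is:
  fixes x :: "'a::real_normed_algebra_1"
  assumes "gdrazin_invertible x"
  shows "is_gdrazin_inverse x (gdrazin x)"
proof -
  obtain y where y: "is_gdrazin_inverse x y" using assms unfolding gdrazin_invertible_def by blast
  show ?thesis unfolding gdrazin_def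
    by (rule theI[of _ y]) (use y gd_unique in blast)+
qed

lemma gd_eq:
  fixes x :: "'a::real_normed_algebra_1"
  assumes "is_gdrazin_inverse x y"
  shows "gdrazin x = y"
  using gd_unique[OF gd_is assms] assms unfolding gdrazin_invertible_def by blast



lemma twisted_iter:
  fixes z A B :: "'a::complex_banach_algebra_1"
  assumes "z = c *\<^sub>C (A * z * B)"
  shows "z = c^n *\<^sub>C (A^n * z * B^n)"
proof (induction n)
  case 0 show ?case by (simp add: scaleC_one)
next
  case (Suc n)
  have e1: "A^n * z * B^n = A^n * (c *\<^sub>C (A * z * B)) * B^n"
    using assms by (rule arg_cong[where f="\<lambda>w. A^n * w * B^n"])
  have e2: "A^n * (A * z * B) * B^n = A^Suc n * z * B^Suc n"
    by (metis mult.assoc power_Suc power_Suc2)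
  have "z = c^n *\<^sub>C (A^n * z * B^n)" by (rule Suc)
  also have "\<dots> = c^n *\<^sub>C (A^n * (c *\<^sub>C (A * z * B)) * B^n)" by (simp only: e1)
  also have "\<dots> = c^n *\<^sub>C (c *\<^sub>C (A^n * (A * z * B) * B^n))"
    by (simp only: mult_scaleC_left mult_scaleC_right)
  also have "\<dots> = (c^n * c) *\<^sub>C (A^Suc n * z * B^Suc n)"
    by (simp only: scaleC_scaleC e2)
  finally show ?case by (simp only: power_Suc2)
qed

lemma twisted_zero:
  fixes z A B :: "'a::complex_banach_algebra_1"
  assumes "z = c *\<^sub>C (A * z * B)" "quasinilpotent A \<or> quasinilpotent B"
  shows "z = 0"
proof -
  have bnd: "norm z \<le> (cmod c)^n * norm (A^n) * norm z * norm (B^n)" for n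
  proof -
    have "norm z = (cmod c)^n * norm (A^n * z * B^n)"
      using twisted_iter[OF assms(1), of n] norm_scaleC by (metis norm_power)
    also have "\<dots> \<le> (cmod c)^n * (norm (A^n) * norm z * norm (B^n))"
      by (intro mult_left_mono) (auto intro!: order_trans[OF norm_mult_ineq] mult_right_mono norm_mult_ineq)
    finally show ?thesis by (simp add: mult.assoc)
  qed
  from assms(2) show ?thesis
  proof
    assume qA: "quasinilpotent A"
    show ?thesis
    proof (rule zero_from_decay[OF qA, where K = "cmod c * norm B" and M = "norm z"])
      fix n :: nat
      have "norm z \<le> (cmod c)^n * norm (A^n) * norm z * norm (B^n)" by (rule bnd)
      also have "\<dots> \<le> (cmod c)^n * norm (A^n) * norm z * norm B ^ n"
        by (intro mult_left_mono norm_power_ineq) auto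
      finally show "norm z \<le> norm z * ((cmod c * norm B)^n * norm (A^n))"
        by (simp add: power_mult_distrib mult_ac)
    qed auto
  next
    assume qB: "quasinilpotent B"
    show ?thesis
    proof (rule zero_from_decay[OF qB, where K = "cmod c * norm A" and M = "norm z"])
      fix n :: nat
      have "norm z \<le> (cmod c)^n * norm (A^n) * norm z * norm (B^n)" by (rule bnd)
      also have "\<dots> \<le> (cmod c)^n * norm A ^ n * norm z * norm (B^n)"
        by (intro mult_left_mono mult_right_mono norm_power_ineq) auto
      finally show "norm z \<le> norm z * ((cmod c * norm A)^n * norm (B^n))"
        by (simp add: power_mult_distrib mult_ac)
    qed auto
  qed
qed



lemma scaleC_norm_le:
  fixes w :: "'a::complex_banach_algebra_1"
  assumes "cmod d \<le> 1"
  shows "norm (d *\<^sub>C w) \<le> norm w"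
  using assms by (simp add: norm_scaleC mult_left_le_one_le)

lemma twisted_pow:
  fixes u v :: "'a::complex_banach_algebra_1"
  assumes "u * v = c *\<^sub>C (v * u)"
  shows "u * v^k = c^k *\<^sub>C (v^k * u)"
proof (induction k)
  case 0 show ?case by (simp add: scaleC_one)
next
  case (Suc k)
  have "u * v^Suc k = (u * v) * v^k" by (simp add: mult.assoc)
  also have "\<dots> = c *\<^sub>C (v * (u * v^k))" by (simp add: assms mult_scaleC_left mult.assoc)
  also have "\<dots> = c *\<^sub>C (v * (c^k *\<^sub>C (v^k * u)))" using Suc by simp
  also have "\<dots> = (c * c^k) *\<^sub>C (v^Suc k * u)"
    by (simp add: mult_scaleC_right scaleC_scaleC mult.assoc)
  finally show ?case by simp
qed

lemma sum_pow2_split: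
  fixes g :: "nat \<Rightarrow> 'b::comm_monoid_add"
  shows "(\<Sum>i<2^Suc n. g i) = (\<Sum>i<2^n. g i) + (\<Sum>i<2^n. g (i + 2^n))"
proof -
  have "(\<Sum>i<2^Suc n. g i) = (\<Sum>i\<in>{0..<2^n}. g i) + (\<Sum>i\<in>{2^n..<2^Suc n}. g i)"
    by (subst sum.atLeastLessThan_concat) (auto simp: lessThan_atLeast0)
  also have "(\<Sum>i\<in>{2^n..<2^Suc n}. g i) = (\<Sum>i\<in>{0 + 2^n..<2^n + 2^n}. g i)" by (simp add: mult_2)
  also have "\<dots> = (\<Sum>i\<in>{0..<2^n}. g (i + 2^n))" by (rule sum.shift_bounds_nat_ivl)
  finally show ?thesis by (simp add: lessThan_atLeast0)
qed

lemma twisted_expand: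
  fixes u v :: "'a::complex_banach_algebra_1"
  assumes "u * v = c *\<^sub>C (v * u)"
  shows "\<exists>f::nat\<Rightarrow>'a. (u+v)^n = (\<Sum>i<(2::nat)^n. f i) \<and> (\<forall>i<(2::nat)^n. \<exists>m k. k \<le> n \<and> f i = c^m *\<^sub>C (v^k * u^(n-k)))"
proof (induction n)
  case 0
  show ?case by (rule exI[of _ "\<lambda>i. 1"]) (auto intro!: exI[of _ 0] simp: scaleC_one card_lessThan)
next
  case (Suc n)
  then obtain f :: "nat \<Rightarrow> 'a" where f: "(u+v)^n = (\<Sum>i<(2::nat)^n. f i)"
    and fi: "\<And>i. i < (2::nat)^n \<Longrightarrow> \<exists>m k. k \<le> n \<and> f i = c^m *\<^sub>C (v^k * u^(n-k))" by blast
  define g where "g i = (if i < 2^n then u * f i else v * f (i - 2^n))" for i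
  have "(u+v)^Suc n = (u+v) * (\<Sum>i<2^n. f i)" by (simp add: f)
  also have "\<dots> = (\<Sum>i<2^n. u * f i) + (\<Sum>i<2^n. v * f i)"
    by (simp add: distrib_right sum_distrib_left sum.distrib)
  also have "\<dots> = (\<Sum>i<2^Suc n. g i)"
    unfolding sum_pow2_split g_def by simp
  finally have 1: "(u+v)^Suc n = (\<Sum>i<2^Suc n. g i)" .
  have 2: "\<exists>m k. k \<le> Suc n \<and> g i = c^m *\<^sub>C (v^k * u^(Suc n-k))" if i: "i < 2^Suc n" for i
  proof (cases "i < 2^n")
    case True
    obtain m k where k: "k \<le> n" and fk: "f i = c^m *\<^sub>C (v^k * u^(n-k))" using fi[OF True] by blast
    have "g i = u * (c^m *\<^sub>C (v^k * u^(n-k)))" using True fk by (simp add: g_def)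
    also have "\<dots> = c^m *\<^sub>C ((u * v^k) * u^(n-k))" by (simp add: mult_scaleC_right mult.assoc)
    also have "\<dots> = c^m *\<^sub>C (c^k *\<^sub>C (v^k * (u * u^(n-k))))"
      by (simp add: twisted_pow[OF assms] mult_scaleC_left mult.assoc)
    also have "\<dots> = c^(m+k) *\<^sub>C (v^k * u^(Suc n - k))"
      using k by (simp add: scaleC_scaleC power_add Suc_diff_le)
    finally show ?thesis using k by (intro exI[of _ "m+k"] exI[of _ k]) auto
  next
    case False
    hence i': "i - 2^n < 2^n" using i by auto
    obtain m k where k: "k \<le> n" and fk: "f (i - 2^n) = c^m *\<^sub>C (v^k * u^(n-k))" using fi[OF i'] by blast
    have "g i = v * (c^m *\<^sub>C (v^k * u^(n-k)))" using False fk by (simp add: g_def)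
    also have "\<dots> = c^m *\<^sub>C (v^Suc k * u^(Suc n - Suc k))" by (simp add: mult_scaleC_right mult.assoc)
    finally show ?thesis using k by (intro exI[of _ m] exI[of _ "Suc k"]) auto
  qed
  show ?case using 1 2 by blast
qed

lemma qn_pow_bound_pos:
  fixes x :: "'a::real_normed_algebra_1"
  assumes "\<And>n. norm (x^n) \<le> C * e^n"
  shows "C \<ge> 1"
  using assms[of 0] by simp

lemma qn_sum_twisted_le1:
  fixes u v :: "'a::complex_banach_algebra_1"
  assumes uv: "u * v = c *\<^sub>C (v * u)" and c: "cmod c \<le> 1"
    and qu: "quasinilpotent u" and qv: "quasinilpotent v"
  shows "quasinilpotent (u + v)"
proof (rule bound_qn)
  fix e :: real assume e: "e > 0"
  obtain Cu where Cu: "\<And>n. norm (u^n) \<le> Cu * (e/2)^n" using qn_bound[OF qu, of "e/2"] e by auto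
  obtain Cv where Cv: "\<And>n. norm (v^n) \<le> Cv * (e/2)^n" using qn_bound[OF qv, of "e/2"] e by auto
  have Cu1: "Cu \<ge> 1" by (rule qn_pow_bound_pos[OF Cu])
  have Cv1: "Cv \<ge> 1" by (rule qn_pow_bound_pos[OF Cv])
  have "norm ((u+v)^n) \<le> (Cu * Cv) * e^n" for n
  proof -
    obtain f :: "nat \<Rightarrow> 'a" where f: "(u+v)^n = (\<Sum>i<(2::nat)^n. f i)"
      and fi: "\<And>i. i < (2::nat)^n \<Longrightarrow> \<exists>m k. k \<le> n \<and> f i = c^m *\<^sub>C (v^k * u^(n-k))"
      using twisted_expand[OF uv, of n] by blast
    have fb: "norm (f i) \<le> Cu * Cv * (e/2)^n" if iN: "i < (2::nat)^n" for i
    proof -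
      obtain m k where k: "k \<le> n" and fk: "f i = c^m *\<^sub>C (v^k * u^(n-k))" using fi[OF iN] by blast
      have "norm (f i) \<le> norm (v^k * u^(n-k))" unfolding fk
        by (rule scaleC_norm_le) (use c in \<open>simp add: norm_power power_le_one\<close>)
      also have "\<dots> \<le> norm (v^k) * norm (u^(n-k))" by (rule norm_mult_ineq)
      also have "\<dots> \<le> (Cv * (e/2)^k) * (Cu * (e/2)^(n-k))"
        using Cv1 e by (intro mult_mono Cu Cv) auto
      also have "\<dots> = Cu * Cv * ((e/2)^k * (e/2)^(n-k))" by simp
      also have "(e/2)^k * (e/2)^(n-k) = (e/2)^n" using k by (simp add: power_add[symmetric])
      finally show ?thesis .
    qed
    have "norm ((u+v)^n) \<le> (\<Sum>i<2^n. norm (f i))" unfolding f by (rule norm_sum)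
    also have "\<dots> \<le> (\<Sum>i<(2::nat)^n. Cu * Cv * (e/2)^n)" by (intro sum_mono fb) auto
    also have "\<dots> = 2^n * (Cu * Cv * (e/2)^n)" by simp
    also have "\<dots> = (Cu * Cv) * e^n" by (simp add: power_divide)
    finally show ?thesis .
  qed
  thus "\<exists>C. \<forall>n. norm ((u+v)^n) \<le> C * e^n" by blast
qed

lemma qn_sum_twisted:
  fixes u v :: "'a::complex_banach_algebra_1"
  assumes uv: "u * v = c *\<^sub>C (v * u)" and c: "c \<noteq> 0"
    and qu: "quasinilpotent u" and qv: "quasinilpotent v"
  shows "quasinilpotent (u + v)"
proof (cases "cmod c \<le> 1")
  case True thus ?thesis using qn_sum_twisted_le1[OF uv _ qu qv] by simp
next
  case False
  have vu: "v * u = inverse c *\<^sub>C (u * v)"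
    using c by (simp add: uv scaleC_scaleC scaleC_one)
  have "cmod (inverse c) \<le> 1" using False by (simp add: norm_inverse inverse_le_1_iff)
  hence "quasinilpotent (v + u)" using qn_sum_twisted_le1[OF vu _ qv qu] by simp
  thus ?thesis by (simp add: add.commute)
qed



lemma scaleC_mult_zero:
  fixes w :: "'a::complex_banach_algebra_1"
  shows "w = 0 \<Longrightarrow> c *\<^sub>C w = 0" by simp

lemma main_core:
  fixes a b x y :: "'a::complex_banach_algebra_1" and l :: complex
  assumes l: "l \<noteq> 0"
    and X: "is_gdrazin_inverse a x" and Y: "is_gdrazin_inverse b y"
    and H: "a * b = l *\<^sub>C ((1 - a*x) * b * a * (1 - b*y))"
  shows "x * b = 0" "a * y = 0" "b * x = 0" "y * a = 0" "x * y = 0" "y * x = 0"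
    "is_gdrazin_inverse (a + b) (x + y)"
proof -
  note XB = gd_basic[OF X] and YB = gd_basic[OF Y]
  have ax: "a*x = x*a" and xax: "x*a*x = x" using XB by auto
  have by_: "b*y = y*b" and yby: "y*b*y = y" using YB by auto
  have x_xxa: "x = x*x*a" using xax ax by (metis mult.assoc)
  have x_axx: "x = a*x*x" using xax ax by (metis mult.assoc)
  have y_yyb: "y = y*y*b" using yby by_ by (metis mult.assoc)
  have y_byy: "y = b*y*y" using yby by_ by (metis mult.assoc)
  have xp: "x * (1 - a*x) = 0" using xax by (simp add: algebra_simps)
  have qy: "(1 - b*y) * y = 0" using y_byy by (simp add: algebra_simps)
  have xab: "x*(a*b) = 0"
  proof -
    have "x*(a*b) = l *\<^sub>C ((x * (1 - a*x)) * b * a * (1 - b*y))"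
      unfolding H by (simp add: mult_scaleC_right mult.assoc)
    thus ?thesis using xp by simp
  qed
  show xb: "x * b = 0"
  proof -
    have "x*b = x*(x*(a*b))" using x_xxa by (metis mult.assoc)
    thus ?thesis using xab by simp
  qed
  have aby: "a*b*y = 0"
  proof -
    have "a*b*y = l *\<^sub>C ((1 - a*x) * b * a * ((1 - b*y) * y))"
      unfolding H by (simp add: mult_scaleC_left mult.assoc)
    thus ?thesis using qy by simp
  qed
  show ay: "a * y = 0"
  proof -
    have "a*y = (a*b*y)*y" using y_byy by (metis mult.assoc)
    thus ?thesis using aby by simp
  qed
  have pb: "(1 - a*x) * b = b" using xb by (simp add: algebra_simps)
  have aq: "a * (1 - b*y) = a" using aby by (simp add: algebra_simps)
  have ab: "a*b = l *\<^sub>C (b*a)"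
  proof -
    have "(1 - a*x) * b * a * (1 - b*y) = ((1 - a*x) * b) * (a * (1 - b*y))" by (simp add: mult.assoc)
    thus ?thesis using H pb aq by simp
  qed
  have ba: "b*a = inverse l *\<^sub>C (a*b)"
    using l by (simp add: ab scaleC_scaleC scaleC_one)
  define N where "N = a - a*a*x"
  define M where "M = b - b*b*y"
  have qnN: "quasinilpotent N" unfolding N_def using XB by simp
  have qnM: "quasinilpotent M" unfolding M_def using YB by simp
  show bx: "b * x = 0"
  proof (rule twisted_zero[where c = "inverse l" and A = N and B = x])
    have xbx: "x*(b*x) = 0" using xb by (simp add: mult.assoc[symmetric])
    have Nz: "N*(b*x) = a*(b*x)" unfolding N_def using xbx by (simp add: algebra_simps)
    have "b*x = (b*a)*x*x" using x_axx by (metis mult.assoc)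
    also have "\<dots> = inverse l *\<^sub>C (a*b*x*x)" by (simp add: ba mult_scaleC_left)
    also have "a*b*x*x = N*(b*x)*x" using Nz by (simp add: mult.assoc)
    finally show "b*x = inverse l *\<^sub>C (N*(b*x)*x)" .
  qed (use qnN in simp)
  show ya: "y * a = 0"
  proof (rule twisted_zero[where c = "inverse l" and A = y and B = M])
    have abby: "a*b*b*y = 0"
    proof -
      have "a*b*b*y = l *\<^sub>C (b*(a*b*y))" by (simp add: ab mult_scaleC_left mult.assoc)
      thus ?thesis using aby by simp
    qed
    have wM: "y*a*b = y*a*M" unfolding M_def using abby by (simp add: algebra_simps)
    have "y*a = y*y*(b*a)" using y_yyb by (metis mult.assoc)
    also have "\<dots> = inverse l *\<^sub>C (y*y*a*b)" by (simp add: ba mult_scaleC_right mult.assoc)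
    also have "y*y*a*b = y*(y*a)*M" using wM by (simp add: mult.assoc)
    finally show "y*a = inverse l *\<^sub>C (y*(y*a)*M)" .
  qed (use qnM in simp)
  show xy: "x * y = 0"
  proof -
    have "x*y = x*x*(a*y)" using x_xxa by (metis mult.assoc)
    thus ?thesis using ay by simp
  qed
  show yx: "y * x = 0"
  proof -
    have "y*x = y*y*(b*x)" using y_yyb by (metis mult.assoc)
    thus ?thesis using bx by simp
  qed
  have st: "(a+b)*(x+y) = a*x + b*y" using ay bx by (simp add: algebra_simps)
  have ts: "(x+y)*(a+b) = a*x + b*y" using xb ya ax by_ by (simp add: algebra_simps)
  have tst: "(x+y)*(a+b)*(x+y) = x+y"
  proof -
    have "(x+y)*(a+b)*(x+y) = (a*x + b*y)*(x+y)" using ts by simp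
    also have "\<dots> = a*x*x + a*(x*y) + b*(y*x) + b*y*y" by (simp add: algebra_simps)
    also have "\<dots> = x + y" using xy yx x_axx y_byy by simp
    finally show ?thesis .
  qed
  have sst: "(a+b) - (a+b)*(a+b)*(x+y) = N + M"
  proof -
    have "(a+b)*(a+b)*(x+y) = (a+b)*(a*x + b*y)" using st by (simp add: mult.assoc)
    also have "\<dots> = a*a*x + a*b*y + b*(a*x) + b*b*y" by (simp add: algebra_simps)
    also have "b*(a*x) = 0" using bx ax by (metis mult.assoc mult_zero_left)
    finally show ?thesis unfolding N_def M_def using aby by (simp add: algebra_simps)
  qed
  have NM: "N*M = a*b"
  proof -
    have abby: "a*(b*(b*y)) = 0"
    proof -
      have "a*(b*(b*y)) = (a*b*y)*b" using by_ by (metis mult.assoc)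
      thus ?thesis using aby by simp
    qed
    have xbw: "x*(b*w) = 0" for w using xb by (simp add: mult.assoc[symmetric])
    show ?thesis unfolding N_def M_def using abby xb xbw by (simp add: algebra_simps)
  qed
  have MN: "M*N = b*a"
  proof -
    have baax: "b*(a*(a*x)) = 0"
    proof -
      have "b*(a*(a*x)) = b*(a*(x*a))" using ax by simp
      also have "\<dots> = b*((a*x)*a)" by (simp add: mult.assoc)
      also have "\<dots> = (b*(x*a))*a" using ax by (simp add: mult.assoc)
      also have "\<dots> = 0" using bx by (simp add: mult.assoc[symmetric])
      finally show ?thesis .
    qed
    have yaw: "y*(a*w) = 0" for w using ya by (simp add: mult.assoc[symmetric])
    show ?thesis unfolding N_def M_def using baax ya yaw by (simp add: algebra_simps)
  qed
  have qnNM: "quasinilpotent (N + M)"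
    by (rule qn_sum_twisted[OF _ l qnN qnM]) (simp add: NM MN ab)
  show "is_gdrazin_inverse (a + b) (x + y)"
    unfolding is_gdrazin_inverse_def using st ts tst sst qnNM by simp
qed



theorem theorem2p4:
  fixes a b :: "'a::complex_banach_algebra_1" and l :: complex
  assumes "l \<noteq> 0"
    and "gdrazin_invertible a" and "gdrazin_invertible b"
    and "a * b = l *\<^sub>C (spectral_idem a * b * a * spectral_idem b)"
  shows "gdrazin_invertible (a + b)
    \<and> summable (\<lambda>n. gdrazin b ^ (n + 2) * a * (a + b) ^ n * spectral_idem a)
    \<and> summable (\<lambda>n. (a + b) ^ n * b * gdrazin a ^ (n + 2))
    \<and> (\<forall>n. summable (\<lambda>k. gdrazin b ^ (k + 1) * a * (a + b) ^ (n + k) * b * gdrazin a ^ (n + 2)))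
    \<and> summable (\<lambda>n. \<Sum>k. gdrazin b ^ (k + 1) * a * (a + b) ^ (n + k) * b * gdrazin a ^ (n + 2))
    \<and> summable (\<lambda>n. gdrazin b ^ (n + 2) * a * (a + b) ^ n * b * gdrazin a)
    \<and> gdrazin (a + b) =
        spectral_idem b * gdrazin a + gdrazin b * spectral_idem a
      + (\<Sum>n. gdrazin b ^ (n + 2) * a * (a + b) ^ n * spectral_idem a)
      + spectral_idem b * (\<Sum>n. (a + b) ^ n * b * gdrazin a ^ (n + 2))
      - (\<Sum>n. \<Sum>k. gdrazin b ^ (k + 1) * a * (a + b) ^ (n + k) * b * gdrazin a ^ (n + 2))
      - (\<Sum>n. gdrazin b ^ (n + 2) * a * (a + b) ^ n * b * gdrazin a)"
proof -
  define x where "x = gdrazin a"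
  define y where "y = gdrazin b"
  have X: "is_gdrazin_inverse a x" unfolding x_def by (rule gd_is[OF assms(2)])
  have Y: "is_gdrazin_inverse b y" unfolding y_def by (rule gd_is[OF assms(3)])
  have H: "a * b = l *\<^sub>C ((1 - a*x) * b * a * (1 - b*y))"
    using assms(4) unfolding spectral_idem_def x_def y_def .
  note C = main_core[OF assms(1) X Y H]
  have G: "gdrazin (a+b) = x + y" by (rule gd_eq[OF C(7)])
  have inv: "gdrazin_invertible (a+b)" using C(7) unfolding gdrazin_invertible_def by blast
  have ya: "y ^ Suc k * a = 0" for k
  proof -
    have "y ^ Suc k * a = y^k * (y * a)" by (simp add: power_Suc2 mult.assoc del: power_Suc)
    thus ?thesis using C(4) by simp
  qed
  have bx: "w * b * x ^ Suc k = 0" for w k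
  proof -
    have "w * b * x ^ Suc k = w * ((b * x) * x^k)" by (simp add: mult.assoc)
    thus ?thesis using C(3) by simp
  qed
  have ya2: "y ^ (n+2) * a = 0" "y ^ (n+1) * a = 0" for n
    using ya[of "Suc n"] ya[of n] by simp_all
  have bx2: "w * b * x ^ (n+2) = 0" for w n using bx[of w "Suc n"] by simp
  have fin: "x + y = (1 - b*y) * x + y * (1 - a*x)"
    using C(4) C(6) by (simp add: algebra_simps mult.assoc[symmetric])
  have f1: "(\<lambda>n. y ^ (n + 2) * a * (a + b) ^ n * (1 - a*x)) = (\<lambda>n. 0)"
    by (rule ext) (simp only: ya2 mult_zero_left)
  have f2: "(\<lambda>n. (a + b) ^ n * b * x ^ (n + 2)) = (\<lambda>n. 0)"
    by (rule ext) (simp only: bx2)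
  have f3: "(\<lambda>k. y ^ (k + 1) * a * (a + b) ^ (n + k) * b * x ^ (n + 2)) = (\<lambda>k. 0)" for n
    by (rule ext) (simp only: ya2 mult_zero_left)
  have f4: "(\<lambda>n. y ^ (n + 2) * a * (a + b) ^ n * b * x) = (\<lambda>n. 0)"
    by (rule ext) (simp only: ya2 mult_zero_left)
  show ?thesis
    unfolding x_def[symmetric] y_def[symmetric] spectral_idem_def G f1 f2 f3 f4
    using inv fin by simp
qed

end
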